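(* Let $M$ be a smooth manifold with a symmetric affine connection $\nabla$, Riemann tensor $R_{abc}{}^d$ and Ricci tensor $R_{ab}$. Then $$\nabla_a\nabla_m R_{bce}{}^m + \nabla_{b}\nabla_m R_{cae}{}^m+\nabla_c\nabla_m R_{abe}{}^m = R_{am}R_{bce}{}^m + R_{bm}R_{cae}{}^m + R_{cm}R_{abe}{}^m .$$
   Context: Abstract index notation with Einstein summation. The connection has symmetric Christoffel symbols $\Gamma^c_{ab}$; $R_{abc}{}^d = \partial_a \Gamma_{bc}^d - \partial_b\Gamma_{ac}^d - \Gamma_{ac}^k\Gamma_{bk}^d + \Gamma_{ak}^d \Gamma_{bc}^k$ and $R_{ac}=R_{abc}{}^b$. *)

theory Defs
  imports "HOL-Analysis.Analysis"
begin

text \<open>Local coordinate description on an open set U of R^n (index type 'n).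
  Christoffel symbols: Gam a b c x = Gamma^c_{ab}(x).
  Tensor fields: T lo up x, lo = list of lower indices, up = list of upper indices.\<close>

definition pd :: "'n::finite \<Rightarrow> (real^'n \<Rightarrow> real) \<Rightarrow> real^'n \<Rightarrow> real" where
  "pd i f x = frechet_derivative f (at x) (axis i 1)"

fun iter_pd :: "'n::finite list \<Rightarrow> (real^'n \<Rightarrow> real) \<Rightarrow> real^'n \<Rightarrow> real" where
  "iter_pd [] f = f"
| "iter_pd (i # is) f = pd i (iter_pd is f)"

definition smooth_on :: "(real^'n::finite) set \<Rightarrow> (real^'n \<Rightarrow> real) \<Rightarrow> bool" where
  "smooth_on U f \<longleftrightarrow> (\<forall>is. \<forall>x\<in>U. iter_pd is f differentiable (at x))"

definition nabla :: "('n::finite \<Rightarrow> 'n \<Rightarrow> 'n \<Rightarrow> real^'n \<Rightarrow> real)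
    \<Rightarrow> ('n list \<Rightarrow> 'n list \<Rightarrow> real^'n \<Rightarrow> real)
    \<Rightarrow> 'n list \<Rightarrow> 'n list \<Rightarrow> real^'n \<Rightarrow> real" where
  "nabla Gam T lo up x = (case lo of [] \<Rightarrow> 0 | a # bs \<Rightarrow>
      pd a (T bs up) x
      - (\<Sum>i<length bs. \<Sum>k\<in>UNIV. Gam a (bs ! i) k x * T (bs[i := k]) up x)
      + (\<Sum>j<length up. \<Sum>k\<in>UNIV. Gam a k (up ! j) x * T bs (up[j := k]) x))"

definition riem :: "('n::finite \<Rightarrow> 'n \<Rightarrow> 'n \<Rightarrow> real^'n \<Rightarrow> real)
    \<Rightarrow> 'n \<Rightarrow> 'n \<Rightarrow> 'n \<Rightarrow> 'n \<Rightarrow> real^'n \<Rightarrow> real" where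
  "riem Gam a b c d x = pd a (Gam b c d) x - pd b (Gam a c d) x
      - (\<Sum>k\<in>UNIV. Gam a c k x * Gam b k d x)
      + (\<Sum>k\<in>UNIV. Gam a k d x * Gam b c k x)"

definition ricci :: "('n::finite \<Rightarrow> 'n \<Rightarrow> 'n \<Rightarrow> real^'n \<Rightarrow> real)
    \<Rightarrow> 'n \<Rightarrow> 'n \<Rightarrow> real^'n \<Rightarrow> real" where
  "ricci Gam a c x = (\<Sum>b\<in>UNIV. riem Gam a b c b x)"

definition riemT :: "('n::finite \<Rightarrow> 'n \<Rightarrow> 'n \<Rightarrow> real^'n \<Rightarrow> real)
    \<Rightarrow> 'n list \<Rightarrow> 'n list \<Rightarrow> real^'n \<Rightarrow> real" where
  "riemT Gam lo up x = riem Gam (lo ! 0) (lo ! 1) (lo ! 2) (up ! 0) x"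

definition divR :: "('n::finite \<Rightarrow> 'n \<Rightarrow> 'n \<Rightarrow> real^'n \<Rightarrow> real)
    \<Rightarrow> 'n list \<Rightarrow> 'n list \<Rightarrow> real^'n \<Rightarrow> real" where
  "divR Gam lo up x = (\<Sum>m\<in>UNIV. nabla Gam (riemT Gam) (m # lo) [m] x)"

end

theory Submission imports Defs begin

lemma pd_has: "(f has_derivative f') (at y) \<Longrightarrow> pd i f y = f' (axis i 1)"
  unfolding pd_def using frechet_derivative_at by metis

lemma fd: "f differentiable (at y) \<Longrightarrow> (f has_derivative frechet_derivative f (at y)) (at y)"
  using frechet_derivative_works by blast

lemma pd_add: "f differentiable (at y) \<Longrightarrow> g differentiable (at y) \<Longrightarrow>
   pd i (\<lambda>z. f z + g z) y = pd i f y + pd i g y"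
  by (subst pd_has[OF has_derivative_add[OF fd fd]], assumption+) (simp add: pd_def)

lemma pd_diff: "f differentiable (at y) \<Longrightarrow> g differentiable (at y) \<Longrightarrow>
   pd i (\<lambda>z. f z - g z) y = pd i f y - pd i g y"
  by (subst pd_has[OF has_derivative_diff[OF fd fd]], assumption+) (simp add: pd_def)

lemma pd_mult: "f differentiable (at y) \<Longrightarrow> g differentiable (at y) \<Longrightarrow>
   pd i (\<lambda>z. f z * g z) y = f y * pd i g y + pd i f y * g y"
  by (subst pd_has[OF has_derivative_mult[OF fd fd]], assumption+) (simp add: pd_def)

lemma pd_sum: "finite A \<Longrightarrow> (\<And>k. k \<in> A \<Longrightarrow> F k differentiable (at y)) \<Longrightarrow>
   pd i (\<lambda>z. \<Sum>k\<in>A. F k z) y = (\<Sum>k\<in>A. pd i (F k) y)"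
  by (subst pd_has[OF has_derivative_sum[OF fd]], assumption+) (simp add: pd_def)

lemma pd_const_fun: "pd i (\<lambda>z. c) = (\<lambda>z. 0)"
  by (rule ext) (simp add: pd_def)

lemma pd_local:
  assumes "open U" "y \<in> U" "\<And>z. z \<in> U \<Longrightarrow> f z = g z"
  shows "pd i f y = pd i g y"
proof -
  have "(f has_derivative f') (at y) = (g has_derivative f') (at y)" for f'
    using has_derivative_transform_within_open[OF _ assms(1,2), of f f' UNIV g]
      has_derivative_transform_within_open[OF _ assms(1,2), of g f' UNIV f] assms(3)
    by auto
  then show ?thesis unfolding pd_def frechet_derivative_def by simp
qed

lemma diff_local:
  assumes "open U" "y \<in> U" "\<And>z. z \<in> U \<Longrightarrow> f z = g z" "f differentiable (at y)"
  shows "g differentiable (at y)"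
  using has_derivative_transform_within_open[OF fd[OF assms(4)] assms(1,2), of g] assms(3)
  by (auto intro: differentiableI)

fun Cn :: "(real^'n::finite) set \<Rightarrow> nat \<Rightarrow> (real^'n \<Rightarrow> real) \<Rightarrow> bool" where
  "Cn U 0 f = (\<forall>z\<in>U. f differentiable (at z))"
| "Cn U (Suc n) f = ((\<forall>z\<in>U. f differentiable (at z)) \<and> (\<forall>i. Cn U n (pd i f)))"

lemma iter_pd_append: "iter_pd (xs @ ys) f = iter_pd xs (iter_pd ys f)"
  by (induction xs) auto

lemma Cn_iff: "Cn U n f \<longleftrightarrow> (\<forall>is. length is \<le> n \<longrightarrow> (\<forall>z\<in>U. iter_pd is f differentiable (at z)))"
proof (induction n arbitrary: f)
  case 0
  then show ?case by auto
next
  case (Suc n)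
  show ?case
  proof
    assume H: "Cn U (Suc n) f"
    show "\<forall>is. length is \<le> Suc n \<longrightarrow> (\<forall>z\<in>U. iter_pd is f differentiable (at z))"
    proof (intro allI impI)
      fix "is" :: "'a list" assume L: "length is \<le> Suc n"
      show "\<forall>z\<in>U. iter_pd is f differentiable (at z)"
      proof (cases "is" rule: rev_cases)
        case Nil then show ?thesis using H by simp
      next
        case (snoc ys i)
        then show ?thesis using H Suc.IH[of "pd i f"] L by (simp add: iter_pd_append)
      qed
    qed
  next
    assume H: "\<forall>is. length is \<le> Suc n \<longrightarrow> (\<forall>z\<in>U. iter_pd is f differentiable (at z))"
    have 1: "\<forall>z\<in>U. f differentiable (at z)" using H[rule_format, of "[]"] by simp
    have "Cn U n (pd i f)" for i
      unfolding Suc.IH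
      using H[rule_format, of "_ @ [i]"] by (simp add: iter_pd_append)
    with 1 show "Cn U (Suc n) f" by simp
  qed
qed

lemma smooth_Cn: "smooth_on U f \<longleftrightarrow> (\<forall>n. Cn U n f)"
proof
  assume "smooth_on U f" then show "\<forall>n. Cn U n f" unfolding smooth_on_def Cn_iff by simp
next
  assume H: "\<forall>n. Cn U n f"
  show "smooth_on U f" unfolding smooth_on_def
  proof (intro allI ballI)
    fix "is" :: "'a list" and x assume "x \<in> U"
    then show "iter_pd is f differentiable (at x)"
      using H[rule_format, of "length is", unfolded Cn_iff] by simp
  qed
qed

lemma Cn_mono: "Cn U (Suc n) f \<Longrightarrow> Cn U n f"
  by (induction n arbitrary: f) auto

lemma Cn_D: "Cn U n f \<Longrightarrow> z \<in> U \<Longrightarrow> f differentiable (at z)"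
  by (cases n) auto

lemma Cn_local: "open U \<Longrightarrow> Cn U n f \<Longrightarrow> (\<And>z. z \<in> U \<Longrightarrow> f z = g z) \<Longrightarrow> Cn U n g"
proof (induction n arbitrary: f g)
  case 0
  then show ?case using diff_local[of U _ f g] by simp
next
  case (Suc n)
  have 1: "\<forall>z\<in>U. g differentiable (at z)" using Suc.prems diff_local[of U _ f g] by simp
  have "Cn U n (pd i g)" for i
  proof (rule Suc.IH[of "pd i f" "pd i g"])
    show "open U" by fact
    show "Cn U n (pd i f)" using Suc.prems(2) by simp
    show "pd i f z = pd i g z" if "z \<in> U" for z using pd_local[of U z f g i] Suc.prems that by blast
  qed
  with 1 show ?case by simp
qed

lemma Cn_const: "Cn U n (\<lambda>z. c)"
proof (induction n arbitrary: c)
  case 0 then show ?case by simp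
next
  case (Suc n) then show ?case by (simp only: Cn.simps pd_const_fun) simp
qed

lemma Cn_add: "open U \<Longrightarrow> Cn U n f \<Longrightarrow> Cn U n g \<Longrightarrow> Cn U n (\<lambda>z. f z + g z)"
proof (induction n arbitrary: f g)
  case 0
  then show ?case by auto
next
  case (Suc n)
  have "Cn U n (pd i (\<lambda>z. f z + g z))" for i
  proof (rule Cn_local[OF \<open>open U\<close>])
    show "Cn U n (\<lambda>z. pd i f z + pd i g z)"
      using Suc.prems by (intro Suc.IH) auto
    show "pd i f z + pd i g z = pd i (\<lambda>z. f z + g z) z" if "z \<in> U" for z
      using pd_add[of f z g i] Suc.prems that by (auto intro: Cn_D)
  qed
  moreover have "\<forall>z\<in>U. (\<lambda>z. f z + g z) differentiable (at z)"
    using Suc.prems Cn_D[of U "Suc n"] by (intro ballI differentiable_add) blast+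
  ultimately show ?case by (simp only: Cn.simps) blast
qed

lemma Cn_mult: "open U \<Longrightarrow> Cn U n f \<Longrightarrow> Cn U n g \<Longrightarrow> Cn U n (\<lambda>z. f z * g z)"
proof (induction n arbitrary: f g)
  case 0
  then show ?case by auto
next
  case (Suc n)
  have "Cn U n (pd i (\<lambda>z. f z * g z))" for i
  proof (rule Cn_local[OF \<open>open U\<close>])
    have "Cn U n f" "Cn U n g" using Suc.prems Cn_mono by blast+
    then show "Cn U n (\<lambda>z. f z * pd i g z + pd i f z * g z)"
      using Suc.prems by (intro Cn_add Suc.IH) auto
    show "f z * pd i g z + pd i f z * g z = pd i (\<lambda>z. f z * g z) z" if "z \<in> U" for z
      using pd_mult[of f z g i] Suc.prems that by (auto intro: Cn_D)
  qed
  moreover have "\<forall>z\<in>U. (\<lambda>z. f z * g z) differentiable (at z)"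
    using Suc.prems Cn_D[of U "Suc n"] by (intro ballI differentiable_mult) blast+
  ultimately show ?case by (simp only: Cn.simps) blast
qed

lemma Cn_minus: "open U \<Longrightarrow> Cn U n f \<Longrightarrow> Cn U n g \<Longrightarrow> Cn U n (\<lambda>z. f z - g z)"
proof -
  assume a: "open U" "Cn U n f" "Cn U n g"
  have "Cn U n (\<lambda>z. f z + (-1) * g z)" using a by (intro Cn_add Cn_mult Cn_const)
  then show ?thesis by simp
qed

lemma Cn_sum:
  assumes "open U" "finite A" "\<And>k. k \<in> A \<Longrightarrow> Cn U n (F k)"
  shows "Cn U n (\<lambda>z. \<Sum>k\<in>A. F k z)"
  using assms(2,3)
proof (induction A rule: finite_induct)
  case empty
  then show ?case by (simp add: Cn_const)
next
  case (insert x B)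
  then show ?case using Cn_add[OF assms(1), of n "F x" "\<lambda>z. \<Sum>k\<in>B. F k z"] by simp
qed

lemma Cn_pd: "Cn U (Suc n) f \<Longrightarrow> Cn U n (pd i f)"
  by simp


lemma line_deriv:
  assumes "g differentiable (at (p + s *\<^sub>R w))"
  shows "((\<lambda>s. g (p + s *\<^sub>R w)) has_real_derivative (frechet_derivative g (at (p + s *\<^sub>R w)) w)) (at s)"
proof -
  have d1: "((\<lambda>s. p + s *\<^sub>R w) has_derivative (\<lambda>h. h *\<^sub>R w)) (at s)"
    by (auto intro!: derivative_eq_intros)
  have L: "linear (frechet_derivative g (at (p + s *\<^sub>R w)))"
    using assms linear_frechet_derivative by blast
  have "((\<lambda>s. g (p + s *\<^sub>R w)) has_derivative (\<lambda>h. frechet_derivative g (at (p + s *\<^sub>R w)) (h *\<^sub>R w))) (at s)"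
    by (rule has_derivative_compose[OF d1 fd[OF assms]])
  moreover have "(\<lambda>h. frechet_derivative g (at (p + s *\<^sub>R w)) (h *\<^sub>R w)) = (*) (frechet_derivative g (at (p + s *\<^sub>R w)) w)"
    using linear_cmul[OF L] by (auto simp: fun_eq_iff)
  ultimately show ?thesis unfolding has_field_derivative_def by simp
qed

lemma line_deriv_pd:
  assumes "g differentiable (at (p + s *\<^sub>R axis i 1))"
  shows "((\<lambda>s. g (p + s *\<^sub>R axis i 1)) has_real_derivative pd i g (p + s *\<^sub>R axis i 1)) (at s)"
  using line_deriv[OF assms] unfolding pd_def .

lemma schwarz:
  assumes U: "open U" and C: "Cn U 2 f" and z: "z \<in> U"
  shows "pd i (pd j f) z = pd j (pd i f) z"
proof (rule ccontr)
  assume ne: "pd i (pd j f) z \<noteq> pd j (pd i f) z"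
  define A where "A = pd j (pd i f) z"
  define B where "B = pd i (pd j f) z"
  define d where "d = \<bar>A - B\<bar>"
  have d: "d > 0" using ne unfolding d_def A_def B_def by simp
  define u where "u = (axis i 1 :: real^'a)"
  define v where "v = (axis j 1 :: real^'a)"
  have C1: "Cn U 1 (pd k f)" for k using C by (simp add: numeral_2_eq_2)
  have C0: "Cn U 0 (pd k (pd l f))" for k l using C1 by (simp add: numeral_2_eq_2)
  have Df: "f differentiable (at y)" if "y \<in> U" for y using C that by (simp add: numeral_2_eq_2)
  have D1: "pd k f differentiable (at y)" if "y \<in> U" for y k using C1 that by simp
  have D2: "pd k (pd l f) differentiable (at y)" if "y \<in> U" for y k l using C0 that by simp
  have "continuous (at z) (pd j (pd i f))"
    using D2[OF z] by (simp add: differentiable_imp_continuous_within)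
  then obtain e1 where e1: "e1 > 0" "\<And>y. dist y z < e1 \<Longrightarrow> dist (pd j (pd i f) y) A < d/2"
    unfolding continuous_at_eps_delta A_def using d by (meson half_gt_zero)
  have "continuous (at z) (pd i (pd j f))"
    using D2[OF z] by (simp add: differentiable_imp_continuous_within)
  then obtain e2 where e2: "e2 > 0" "\<And>y. dist y z < e2 \<Longrightarrow> dist (pd i (pd j f) y) B < d/2"
    unfolding continuous_at_eps_delta B_def using d by (meson half_gt_zero)
  obtain r where r: "r > 0" "ball z r \<subseteq> U" using U z open_contains_ball by blast
  define h where "h = min r (min e1 e2) / 4"
  have h: "h > 0" "2 * h < r" "2 * h < e1" "2 * h < e2" using r e1 e2 unfolding h_def by auto
  define P where "P s t = z + s *\<^sub>R u + t *\<^sub>R v" for s t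
  have Pdist: "dist (P s t) z \<le> 2 * h" if "0 \<le> s" "s \<le> h" "0 \<le> t" "t \<le> h" for s t
  proof -
    have "dist (P s t) z = norm (s *\<^sub>R u + t *\<^sub>R v)" by (simp add: P_def dist_norm)
    also have "\<dots> \<le> norm (s *\<^sub>R u) + norm (t *\<^sub>R v)" by (rule norm_triangle_ineq)
    also have "\<dots> = s + t" using that by (simp add: u_def v_def)
    finally show ?thesis using that by simp
  qed
  have PU: "P s t \<in> U" if "0 \<le> s" "s \<le> h" "0 \<le> t" "t \<le> h" for s t
    using Pdist[OF that] h r by (auto simp: dist_commute)
  have Pu: "P s t = (z + t *\<^sub>R v) + s *\<^sub>R u" for s t by (simp add: P_def algebra_simps)
  have Pv: "P s t = (z + s *\<^sub>R u) + t *\<^sub>R v" for s t by (simp add: P_def algebra_simps)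
  define Del where "Del = f (P h h) - f (P h 0) - f (P 0 h) + f (P 0 0)"
  have "\<exists>sg. 0 < sg \<and> sg < h \<and> (f (P h h) - f (P h 0)) - (f (P 0 h) - f (P 0 0))
          = (h - 0) * (pd i f (P sg h) - pd i f (P sg 0))"
  proof (rule MVT2)
    show "0 < h" by fact
    fix s assume s: "0 \<le> s" "s \<le> h"
    show "((\<lambda>s. f (P s h) - f (P s 0)) has_real_derivative (pd i f (P s h) - pd i f (P s 0))) (at s)"
      unfolding Pu u_def
      by (intro DERIV_diff line_deriv_pd Df, unfold Pu[symmetric, unfolded u_def]) (use s h PU in auto)
  qed
  then obtain sg where sg: "0 < sg" "sg < h" "Del = h * (pd i f (P sg h) - pd i f (P sg 0))"
    unfolding Del_def by (auto simp: algebra_simps)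
  have "\<exists>ta. 0 < ta \<and> ta < h \<and> pd i f (P sg h) - pd i f (P sg 0) = (h - 0) * pd j (pd i f) (P sg ta)"
  proof (rule MVT2)
    show "0 < h" by fact
    fix t assume t: "0 \<le> t" "t \<le> h"
    show "((\<lambda>t. pd i f (P sg t)) has_real_derivative (pd j (pd i f) (P sg t))) (at t)"
      unfolding Pv v_def
      by (intro line_deriv_pd D1, unfold Pv[symmetric, unfolded v_def]) (use t sg PU in auto)
  qed
  then obtain ta where ta: "0 < ta" "ta < h" "Del = h * h * pd j (pd i f) (P sg ta)"
    using sg by auto
  have "\<exists>ta. 0 < ta \<and> ta < h \<and> (f (P h h) - f (P 0 h)) - (f (P h 0) - f (P 0 0))
          = (h - 0) * (pd j f (P h ta) - pd j f (P 0 ta))"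
  proof (rule MVT2)
    show "0 < h" by fact
    fix t assume t: "0 \<le> t" "t \<le> h"
    show "((\<lambda>t. f (P h t) - f (P 0 t)) has_real_derivative (pd j f (P h t) - pd j f (P 0 t))) (at t)"
      unfolding Pv v_def
      by (intro DERIV_diff line_deriv_pd Df, unfold Pv[symmetric, unfolded v_def]) (use t h PU in auto)
  qed
  then obtain tb where tb: "0 < tb" "tb < h" "Del = h * (pd j f (P h tb) - pd j f (P 0 tb))"
    unfolding Del_def by (auto simp: algebra_simps)
  have "\<exists>sb. 0 < sb \<and> sb < h \<and> pd j f (P h tb) - pd j f (P 0 tb) = (h - 0) * pd i (pd j f) (P sb tb)"
  proof (rule MVT2)
    show "0 < h" by fact
    fix s assume s: "0 \<le> s" "s \<le> h"
    show "((\<lambda>s. pd j f (P s tb)) has_real_derivative (pd i (pd j f) (P s tb))) (at s)"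
      unfolding Pu u_def
      by (intro line_deriv_pd D1, unfold Pu[symmetric, unfolded u_def]) (use s tb PU in auto)
  qed
  then obtain sb where sb: "0 < sb" "sb < h" "Del = h * h * pd i (pd j f) (P sb tb)"
    using tb by auto
  have X: "pd j (pd i f) (P sg ta) = pd i (pd j f) (P sb tb)"
    using ta(3) sb(3) h(1) by simp
  have "dist (pd j (pd i f) (P sg ta)) A < d/2"
    using e1(2)[of "P sg ta"] Pdist[of sg ta] sg ta h by linarith
  moreover have "dist (pd i (pd j f) (P sb tb)) B < d/2"
    using e2(2)[of "P sb tb"] Pdist[of sb tb] sb tb h by linarith
  ultimately have "\<bar>A - B\<bar> < d" using X unfolding dist_real_def by (simp add: abs_if split: if_splits)
  then show False unfolding d_def by simp
qed


definition Rj :: "('n::finite\<Rightarrow>'n\<Rightarrow>'n\<Rightarrow>real) \<Rightarrow> ('n\<Rightarrow>'n\<Rightarrow>'n\<Rightarrow>'n\<Rightarrow>real) \<Rightarrow> 'n\<Rightarrow>'n\<Rightarrow>'n\<Rightarrow>'n\<Rightarrow>real" where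
 "Rj g p a b c d = p a b c d - p b a c d - (\<Sum>k\<in>UNIV. g a c k * g b k d) + (\<Sum>k\<in>UNIV. g a k d * g b c k)"

definition dRj :: "('n::finite\<Rightarrow>'n\<Rightarrow>'n\<Rightarrow>real) \<Rightarrow> ('n\<Rightarrow>'n\<Rightarrow>'n\<Rightarrow>'n\<Rightarrow>real) \<Rightarrow> ('n\<Rightarrow>'n\<Rightarrow>'n\<Rightarrow>'n\<Rightarrow>'n\<Rightarrow>real) \<Rightarrow> 'n\<Rightarrow>'n\<Rightarrow>'n\<Rightarrow>'n\<Rightarrow>'n\<Rightarrow>real" where
 "dRj g p q e a b c d = q e a b c d - q e b a c d
    - (\<Sum>k\<in>UNIV. g a c k * p e b k d + p e a c k * g b k d)
    + (\<Sum>k\<in>UNIV. g a k d * p e b c k + p e a k d * g b c k)"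

definition nRj where
 "nRj g p q a b c e d = dRj g p q a b c e d - (\<Sum>k\<in>UNIV. g a b k * Rj g p k c e d)
   - (\<Sum>k\<in>UNIV. g a c k * Rj g p b k e d) - (\<Sum>k\<in>UNIV. g a e k * Rj g p b c k d)
   + (\<Sum>k\<in>UNIV. g a k d * Rj g p b c e k)"

lemma symm2: "(\<Sum>k\<in>A. \<Sum>n\<in>A. f k n) = (\<Sum>k\<in>A. \<Sum>n\<in>A. (f k n + f n k) / (2::real))"
proof -
  have "(\<Sum>k\<in>A. \<Sum>n\<in>A. (f k n + f n k) / 2) = ((\<Sum>k\<in>A. \<Sum>n\<in>A. f k n) + (\<Sum>k\<in>A. \<Sum>n\<in>A. f n k)) / 2"
    by (simp only: add_divide_distrib sum.distrib sum_divide_distrib)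
  also have "(\<Sum>k\<in>A. \<Sum>n\<in>A. f n k) = (\<Sum>k\<in>A. \<Sum>n\<in>A. f k n)"
    by (rule sum.swap)
  finally show ?thesis by simp
qed

lemma bianchi_alg:
  fixes g :: "'n::finite\<Rightarrow>'n\<Rightarrow>'n\<Rightarrow>real"
  assumes gs: "\<And>a b c. g a b c = g b a c"
    and ps: "\<And>i a b c. p i a b c = p i b a c"
    and qs: "\<And>i j a b c. q i j a b c = q j i a b c"
    and qs2: "\<And>i j a b c. q i j a b c = q i j b a c"
  shows "nRj g p q a b c e d + nRj g p q b c a e d + nRj g p q c a b e d = 0"
  apply (simp add: nRj_def dRj_def Rj_def sum_distrib_left sum.distrib sum_subtractf algebra_simps)
  apply (simp add: gs ps qs qs2)
  apply (simp only: sum.distrib[symmetric])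
  apply (subst (1 2) symm2)
  apply (rule sum.cong[OF refl])+
  apply (simp add: gs algebra_simps)
  done

lemma nRj_antisym:
  fixes g :: "'n::finite\<Rightarrow>'n\<Rightarrow>'n\<Rightarrow>real"
  assumes gs: "\<And>a b c. g a b c = g b a c"
  shows "nRj g p q a b c e d = - nRj g p q a c b e d"
  by (simp add: nRj_def dRj_def Rj_def sum_distrib_left sum.distrib sum_subtractf algebra_simps)

lemma Rj_bianchi1:
  fixes g :: "'n::finite\<Rightarrow>'n\<Rightarrow>'n\<Rightarrow>real"
  assumes gs: "\<And>a b c. g a b c = g b a c"
    and ps: "\<And>i a b c. p i a b c = p i b a c"
  shows "Rj g p a b c d + Rj g p b c a d + Rj g p c a b d = 0"
  apply (simp add: Rj_def sum_distrib_left sum.distrib sum_subtractf algebra_simps)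
  apply (simp add: gs ps)
  apply (simp add: mult.commute)
  done

definition nRicj where
 "nRicj g p q c b e = (\<Sum>m\<in>UNIV. dRj g p q c b m e m)
    - (\<Sum>k\<in>UNIV. g c b k * (\<Sum>m\<in>UNIV. Rj g p k m e m))
    - (\<Sum>k\<in>UNIV. g c e k * (\<Sum>m\<in>UNIV. Rj g p b m k m))"

lemma contract_alg:
  fixes g :: "'n::finite\<Rightarrow>'n\<Rightarrow>'n\<Rightarrow>real"
  shows "(\<Sum>m\<in>UNIV. nRj g p q b c m e m) = nRicj g p q b c e"
  apply (simp add: nRj_def nRicj_def sum_distrib_left sum.distrib sum_subtractf algebra_simps)
  apply (simp only: sum.distrib[symmetric])
  apply (subst (1 2) symm2)
  apply (rule sum.cong[OF refl])+
  apply (simp add: algebra_simps)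
  done

definition nTj where
 "nTj g t dt c b e = dt c b e - (\<Sum>k\<in>UNIV. g c b k * t k e) - (\<Sum>k\<in>UNIV. g c e k * t b k)"

definition dnTj where
 "dnTj g p t dt ddt a c b e = ddt a c b e - (\<Sum>k\<in>UNIV. g c b k * dt a k e + p a c b k * t k e)
    - (\<Sum>k\<in>UNIV. g c e k * dt a b k + p a c e k * t b k)"

definition N2j where
 "N2j g p t dt ddt a c b e = dnTj g p t dt ddt a c b e
    - (\<Sum>k\<in>UNIV. g a c k * nTj g t dt k b e)
    - (\<Sum>k\<in>UNIV. g a b k * nTj g t dt c k e)
    - (\<Sum>k\<in>UNIV. g a e k * nTj g t dt c b k)"

lemma ricci_alg:
  fixes g :: "'n::finite\<Rightarrow>'n\<Rightarrow>'n\<Rightarrow>real"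
  assumes gs: "\<And>a b c. g a b c = g b a c"
    and ps: "\<And>i a b c. p i a b c = p i b a c"
    and ds: "\<And>a c b e. ddt a c b e = ddt c a b e"
  shows "N2j g p t dt ddt a c b e - N2j g p t dt ddt c a b e
     = - (\<Sum>m\<in>UNIV. Rj g p a c b m * t m e + Rj g p a c e m * t b m)"
  apply (simp add: N2j_def dnTj_def nTj_def Rj_def sum_distrib_left sum_distrib_right sum.distrib sum_subtractf algebra_simps)
  apply (simp add: gs ps ds)
  apply (simp only: sum.distrib[symmetric])
  apply (subst (1 2) symm2)
  apply (rule sum.cong[OF refl])+
  apply (simp add: gs algebra_simps)
  done


definition nT :: "('n::finite \<Rightarrow> 'n \<Rightarrow> 'n \<Rightarrow> real^'n \<Rightarrow> real) \<Rightarrow> ('n \<Rightarrow> 'n \<Rightarrow> real^'n \<Rightarrow> real)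
   \<Rightarrow> 'n \<Rightarrow> 'n \<Rightarrow> 'n \<Rightarrow> real^'n \<Rightarrow> real" where
  "nT Gam T c b e y = pd c (T b e) y - (\<Sum>k\<in>UNIV. Gam c b k y * T k e y) - (\<Sum>k\<in>UNIV. Gam c e k y * T b k y)"

definition N2T :: "('n::finite \<Rightarrow> 'n \<Rightarrow> 'n \<Rightarrow> real^'n \<Rightarrow> real) \<Rightarrow> ('n \<Rightarrow> 'n \<Rightarrow> real^'n \<Rightarrow> real)
   \<Rightarrow> 'n \<Rightarrow> 'n \<Rightarrow> 'n \<Rightarrow> 'n \<Rightarrow> real^'n \<Rightarrow> real" where
  "N2T Gam T a c b e y = pd a (nT Gam T c b e) y - (\<Sum>k\<in>UNIV. Gam a c k y * nT Gam T k b e y)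
     - (\<Sum>k\<in>UNIV. Gam a b k y * nT Gam T c k e y) - (\<Sum>k\<in>UNIV. Gam a e k y * nT Gam T c b k y)"

definition gj :: "('n::finite \<Rightarrow> 'n \<Rightarrow> 'n \<Rightarrow> real^'n \<Rightarrow> real) \<Rightarrow> real^'n \<Rightarrow> 'n \<Rightarrow> 'n \<Rightarrow> 'n \<Rightarrow> real" where
  "gj Gam y a b c = Gam a b c y"
definition pj :: "('n::finite \<Rightarrow> 'n \<Rightarrow> 'n \<Rightarrow> real^'n \<Rightarrow> real) \<Rightarrow> real^'n \<Rightarrow> 'n \<Rightarrow> 'n \<Rightarrow> 'n \<Rightarrow> 'n \<Rightarrow> real" where
  "pj Gam y i a b c = pd i (Gam a b c) y"
definition qj :: "('n::finite \<Rightarrow> 'n \<Rightarrow> 'n \<Rightarrow> real^'n \<Rightarrow> real) \<Rightarrow> real^'n \<Rightarrow> 'n \<Rightarrow> 'n \<Rightarrow> 'n \<Rightarrow> 'n \<Rightarrow> 'n \<Rightarrow> real" where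
  "qj Gam y i j a b c = pd i (pd j (Gam a b c)) y"

lemma riem_fun: "riem Gam a b c d = (\<lambda>x. pd a (Gam b c d) x - pd b (Gam a c d) x
      - (\<Sum>k\<in>UNIV. Gam a c k x * Gam b k d x) + (\<Sum>k\<in>UNIV. Gam a k d x * Gam b c k x))"
  by (rule ext) (simp add: riem_def)

lemma ricci_fun: "ricci Gam a c = (\<lambda>x. \<Sum>b\<in>UNIV. riem Gam a b c b x)"
  by (rule ext) (simp add: ricci_def)

lemma nT_fun: "nT Gam T c b e = (\<lambda>y. pd c (T b e) y - (\<Sum>k\<in>UNIV. Gam c b k y * T k e y) - (\<Sum>k\<in>UNIV. Gam c e k y * T b k y))"
  by (rule ext) (simp add: nT_def)

lemma riemT_fun: "riemT Gam [b, c, e] [d] = riem Gam b c e d"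
  by (rule ext) (simp add: riemT_def)

context
  fixes Gam :: "'n::finite \<Rightarrow> 'n \<Rightarrow> 'n \<Rightarrow> real^'n \<Rightarrow> real" and U :: "(real^'n) set"
  assumes U: "open U"
    and GS: "\<And>a b c. smooth_on U (Gam a b c)"
    and GSym: "\<And>a b c y. y \<in> U \<Longrightarrow> Gam a b c y = Gam b a c y"
begin

lemma sm_add: "smooth_on U f \<Longrightarrow> smooth_on U g \<Longrightarrow> smooth_on U (\<lambda>z. f z + g z)"
  using Cn_add[OF U] by (simp add: smooth_Cn)
lemma sm_diff: "smooth_on U f \<Longrightarrow> smooth_on U g \<Longrightarrow> smooth_on U (\<lambda>z. f z - g z)"
  using Cn_minus[OF U] by (simp add: smooth_Cn)
lemma sm_mult: "smooth_on U f \<Longrightarrow> smooth_on U g \<Longrightarrow> smooth_on U (\<lambda>z. f z * g z)"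
  using Cn_mult[OF U] by (simp add: smooth_Cn)
lemma sm_sum: "(\<And>k. smooth_on U (F k)) \<Longrightarrow> smooth_on U (\<lambda>z. \<Sum>k\<in>(UNIV::'m::finite set). F k z)"
  using Cn_sum[OF U, of "UNIV::'m set"] by (simp add: smooth_Cn)
lemma sm_pd: "smooth_on U f \<Longrightarrow> smooth_on U (pd i f)"
  by (simp add: smooth_Cn) (metis Cn_pd)
lemma sm_D: "smooth_on U f \<Longrightarrow> y \<in> U \<Longrightarrow> f differentiable (at y)"
  by (simp add: smooth_Cn) (metis Cn.simps(1))
lemma sm_schwarz: "smooth_on U f \<Longrightarrow> y \<in> U \<Longrightarrow> pd i (pd j f) y = pd j (pd i f) y"
  by (simp add: smooth_Cn schwarz[OF U])

lemma pd_sumU: "(\<And>k. F k differentiable (at y)) \<Longrightarrow> pd i (\<lambda>z. \<Sum>k\<in>(UNIV::'m::finite set). F k z) y = (\<Sum>k\<in>UNIV. pd i (F k) y)"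
  by (rule pd_sum) auto

lemmas sm_intros = sm_add sm_diff sm_mult sm_sum sm_pd GS

lemma sm_riem: "smooth_on U (riem Gam a b c d)"
  unfolding riem_fun by (intro sm_intros)

lemma sm_ricci: "smooth_on U (ricci Gam a c)"
  unfolding ricci_fun by (intro sm_intros sm_riem)

lemma sm_nT: "(\<And>b e. smooth_on U (T b e)) \<Longrightarrow> smooth_on U (nT Gam T c b e)"
  unfolding nT_fun by (intro sm_intros) auto

lemma D_pd_Gam: "y \<in> U \<Longrightarrow> pd i (Gam a b c) differentiable (at y)"
  by (intro sm_D sm_pd GS)
lemma D_Gam: "y \<in> U \<Longrightarrow> Gam a b c differentiable (at y)"
  by (intro sm_D GS)

lemma riem_jet: "riem Gam a b c d y = Rj (gj Gam y) (pj Gam y) a b c d"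
  by (simp add: riem_def Rj_def gj_def pj_def)

lemma pd_riem_jet:
  assumes y: "y \<in> U"
  shows "pd e (riem Gam a b c d) y = dRj (gj Gam y) (pj Gam y) (qj Gam y) e a b c d"
  unfolding riem_fun
  apply (subst pd_add pd_diff pd_sumU pd_mult, (intro sm_D sm_intros y)+)+
  apply (simp add: dRj_def gj_def pj_def qj_def)
  done

lemma nabla_riemT:
  assumes y: "y \<in> U"
  shows "nabla Gam (riemT Gam) [a, b, c, e] [d] y = nRj (gj Gam y) (pj Gam y) (qj Gam y) a b c e d"
  apply (simp add: nabla_def riemT_fun numeral_3_eq_3 sum.lessThan_Suc pd_riem_jet[OF y])
  apply (simp add: riemT_def riem_jet nRj_def gj_def algebra_simps)
  done

lemma gj_sym: "y \<in> U \<Longrightarrow> gj Gam y a b c = gj Gam y b a c"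
  by (simp add: gj_def GSym)
lemma pj_sym: "y \<in> U \<Longrightarrow> pj Gam y i a b c = pj Gam y i b a c"
  unfolding pj_def by (rule pd_local[OF U]) (auto simp: GSym)
lemma qj_sym: "y \<in> U \<Longrightarrow> qj Gam y i j a b c = qj Gam y j i a b c"
  unfolding qj_def by (rule sm_schwarz[OF GS])
lemma qj_sym2: "y \<in> U \<Longrightarrow> qj Gam y i j a b c = qj Gam y i j b a c"
  unfolding qj_def by (rule pd_local[OF U]) (auto intro: pd_local[OF U] simp: GSym)

lemma divR_jet:
  assumes y: "y \<in> U"
  shows "divR Gam [b, c, e] [] y = nRicj (gj Gam y) (pj Gam y) (qj Gam y) c b e - nRicj (gj Gam y) (pj Gam y) (qj Gam y) b c e"
proof -
  let ?g = "gj Gam y" and ?p = "pj Gam y" and ?q = "qj Gam y"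
  have B: "nRj ?g ?p ?q m b c e m = - nRj ?g ?p ?q b c m e m + nRj ?g ?p ?q c b m e m" for m
    using bianchi_alg[of ?g ?p ?q m b c e m] nRj_antisym[of ?g ?p ?q c m b e m]
      gj_sym[OF y] pj_sym[OF y] qj_sym[OF y] qj_sym2[OF y] by fastforce
  have "divR Gam [b, c, e] [] y = (\<Sum>m\<in>UNIV. nRj ?g ?p ?q m b c e m)"
    by (simp add: divR_def nabla_riemT[OF y])
  also have "\<dots> = - (\<Sum>m\<in>UNIV. nRj ?g ?p ?q b c m e m) + (\<Sum>m\<in>UNIV. nRj ?g ?p ?q c b m e m)"
    by (simp add: B sum.distrib sum_negf sum_subtractf)
  finally show ?thesis by (simp add: contract_alg)
qed

lemma nT_ricci_jet:
  assumes y: "y \<in> U"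
  shows "nT Gam (ricci Gam) c b e y = nRicj (gj Gam y) (pj Gam y) (qj Gam y) c b e"
  unfolding nT_def nRicj_def
  apply (subst ricci_fun)
  apply (subst pd_sumU, (intro sm_D sm_riem y)+)
  apply (simp add: pd_riem_jet[OF y] ricci_def riem_jet gj_def)
  done

lemma divR_nT:
  assumes y: "y \<in> U"
  shows "divR Gam [b, c, e] [] y = nT Gam (ricci Gam) c b e y - nT Gam (ricci Gam) b c e y"
  using divR_jet[OF y] nT_ricci_jet[OF y] by simp


lemma ricci_identity:
  assumes y: "y \<in> U" and TS: "\<And>b e. smooth_on U (T b e)"
  shows "N2T Gam T a c b e y - N2T Gam T c a b e y
     = - (\<Sum>m\<in>UNIV. riem Gam a c b m y * T m e y + riem Gam a c e m y * T b m y)"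
proof -
  let ?g = "gj Gam y" and ?p = "pj Gam y"
  let ?t = "\<lambda>b e. T b e y" and ?dt = "\<lambda>c b e. pd c (T b e) y" and ?ddt = "\<lambda>a c b e. pd a (pd c (T b e)) y"
  have nTj: "nT Gam T c b e y = nTj ?g ?t ?dt c b e" for c b e
    by (simp add: nT_def nTj_def gj_def)
  have dnTj: "pd a (nT Gam T c b e) y = dnTj ?g ?p ?t ?dt ?ddt a c b e" for a c b e
    unfolding nT_fun
    apply (subst pd_add pd_diff pd_sumU pd_mult, (intro sm_D sm_intros y TS)+)+
    apply (simp add: dnTj_def gj_def pj_def)
    done
  have N2: "N2T Gam T a c b e y = N2j ?g ?p ?t ?dt ?ddt a c b e" for a c b e
    by (simp add: N2T_def N2j_def nTj dnTj gj_def)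
  show ?thesis
    unfolding N2 riem_jet
    by (rule ricci_alg) (auto simp: gj_sym[OF y] pj_sym[OF y] sm_schwarz[OF TS y])
qed

lemma nabla_divR:
  assumes x: "x \<in> U"
  shows "nabla Gam (divR Gam) [a, b, c, e] [] x
     = N2T Gam (ricci Gam) a c b e x - N2T Gam (ricci Gam) a b c e x"
proof -
  have "pd a (divR Gam [b, c, e] []) x = pd a (\<lambda>y. nT Gam (ricci Gam) c b e y - nT Gam (ricci Gam) b c e y) x"
    by (rule pd_local[OF U x]) (simp add: divR_nT)
  also have "\<dots> = pd a (nT Gam (ricci Gam) c b e) x - pd a (nT Gam (ricci Gam) b c e) x"
    by (intro pd_diff sm_D sm_nT sm_ricci x)
  finally have P: "pd a (divR Gam [b, c, e] []) x = \<dots>" .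
  show ?thesis
    apply (simp add: nabla_def numeral_3_eq_3 sum.lessThan_Suc P)
    apply (simp add: divR_nT[OF x] N2T_def sum_subtractf right_diff_distrib algebra_simps)
    done
qed

end


theorem mainTheorem3:
  fixes Gam :: "'n::finite \<Rightarrow> 'n \<Rightarrow> 'n \<Rightarrow> real^'n \<Rightarrow> real"
    and U :: "(real^'n) set"
  assumes "open U"
    and "\<And>a b c. smooth_on U (Gam a b c)"
    and "\<And>a b c y. y \<in> U \<Longrightarrow> Gam a b c y = Gam b a c y"
    and "x \<in> U"
  shows "nabla Gam (divR Gam) [a, b, c, e] [] x
       + nabla Gam (divR Gam) [b, c, a, e] [] x
       + nabla Gam (divR Gam) [c, a, b, e] [] x
       = (\<Sum>m\<in>UNIV. ricci Gam a m x * riem Gam b c e m x)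
       + (\<Sum>m\<in>UNIV. ricci Gam b m x * riem Gam c a e m x)
       + (\<Sum>m\<in>UNIV. ricci Gam c m x * riem Gam a b e m x)"
proof -
  note ND = nabla_divR[where Gam=Gam and U=U, OF assms(1-4)]

  note RI = ricci_identity[where Gam=Gam and U=U and T="ricci Gam", OF assms(1-4) sm_ricci[where Gam=Gam and U=U, OF assms(1-3)]]
  have as: "riem Gam p q r s x = - riem Gam q p r s x" for p q r s
  proof -
    have "(\<Sum>k\<in>UNIV. Gam q r k x * Gam p k s x) = (\<Sum>k\<in>UNIV. Gam p k s x * Gam q r k x)"
      by (rule sum.cong[OF refl]) (rule mult.commute)
    moreover have "(\<Sum>k\<in>UNIV. Gam q k s x * Gam p r k x) = (\<Sum>k\<in>UNIV. Gam p r k x * Gam q k s x)"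
      by (rule sum.cong[OF refl]) (rule mult.commute)
    ultimately show ?thesis unfolding riem_def by linarith
  qed
  have fb: "riem Gam c b a m x = - riem Gam a c b m x - riem Gam b a c m x" for m
  proof -
    have "Rj (gj Gam x) (pj Gam x) a c b m + Rj (gj Gam x) (pj Gam x) c b a m + Rj (gj Gam x) (pj Gam x) b a c m = 0"
      by (rule Rj_bianchi1; rule gj_sym[where Gam=Gam and U=U, OF assms] pj_sym[where Gam=Gam and U=U, OF assms])
    then show ?thesis by (simp add: riem_jet[where Gam=Gam and U=U, OF assms(1-3)] algebra_simps)
  qed
  have "nabla Gam (divR Gam) [a, b, c, e] [] x
       + nabla Gam (divR Gam) [b, c, a, e] [] x
       + nabla Gam (divR Gam) [c, a, b, e] [] x
      = (N2T Gam (ricci Gam) a c b e x - N2T Gam (ricci Gam) c a b e x)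
      + (N2T Gam (ricci Gam) b a c e x - N2T Gam (ricci Gam) a b c e x)
      + (N2T Gam (ricci Gam) c b a e x - N2T Gam (ricci Gam) b c a e x)"
    by (simp add: ND)
  also have "\<dots> = - (\<Sum>m\<in>UNIV. riem Gam a c b m x * ricci Gam m e x + riem Gam a c e m x * ricci Gam b m x)
      - (\<Sum>m\<in>UNIV. riem Gam b a c m x * ricci Gam m e x + riem Gam b a e m x * ricci Gam c m x)
      - (\<Sum>m\<in>UNIV. riem Gam c b a m x * ricci Gam m e x + riem Gam c b e m x * ricci Gam a m x)"
    by (simp add: RI)
  also have "\<dots> = (\<Sum>m\<in>UNIV. ricci Gam a m x * riem Gam b c e m x)
       + (\<Sum>m\<in>UNIV. ricci Gam b m x * riem Gam c a e m x)
       + (\<Sum>m\<in>UNIV. ricci Gam c m x * riem Gam a b e m x)"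
    (is "?L = ?R")
  proof -
    have "?L = (\<Sum>m\<in>UNIV. - (riem Gam a c b m x * ricci Gam m e x + riem Gam a c e m x * ricci Gam b m x)
      - (riem Gam b a c m x * ricci Gam m e x + riem Gam b a e m x * ricci Gam c m x)
      - (riem Gam c b a m x * ricci Gam m e x + riem Gam c b e m x * ricci Gam a m x))"
      by (simp only: sum_subtractf sum_negf)
    also have "\<dots> = (\<Sum>m\<in>UNIV. ricci Gam a m x * riem Gam b c e m x
       + ricci Gam b m x * riem Gam c a e m x + ricci Gam c m x * riem Gam a b e m x)"
    proof (rule sum.cong[OF refl])
      fix m
      show "- (riem Gam a c b m x * ricci Gam m e x + riem Gam a c e m x * ricci Gam b m x)
      - (riem Gam b a c m x * ricci Gam m e x + riem Gam b a e m x * ricci Gam c m x)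
      - (riem Gam c b a m x * ricci Gam m e x + riem Gam c b e m x * ricci Gam a m x)
       = ricci Gam a m x * riem Gam b c e m x
       + ricci Gam b m x * riem Gam c a e m x + ricci Gam c m x * riem Gam a b e m x"
        unfolding fb[of m] as[of a c e m] as[of b a e m] as[of c b e m]
        by (simp add: algebra_simps)
    qed
    also have "\<dots> = ?R" by (simp only: sum.distrib)
    finally show ?thesis .
  qed
  finally show ?thesis .
qed

end
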